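(* There exist clustering instances with $N\subseteq C$ and $k\le n$ and outcomes $W$ in them that satisfy UPRF but do not satisfy rank-JR.
   Context: Let $(\mathcal X,d)$ be a metric space, $N=[n]$ a set of agents and $C$ a set of candidates located in $\mathcal X$, $k\in\mathbb N^+$; an outcome is $W\subseteq C$ with $|W|\le k$; $B(i,r)=\{x\in\mathcal X:d(i,x)\le r\}$. UPRF: $W$ satisfies UPRF if there are no $\ell\in\mathbb N$, no $N'\subseteq N$ with $|N'|\ge \ell n/k$, and no $y\in\mathbb R$ with $\max_{i,i'\in N'}d(i,i')\le y$ and $|\bigcup_{i\in N'}B(i,y)\cap W|<\ell$. Rank-JR: $W$ satisfies rank-JR if for every $y\in\mathbb R$ and every $N'\subseteq N$ with $|N'|\ge n/k$ and $|\bigcap_{i\in N'}B(i,y)\cap C|\ge1$ there is $i\in N'$ with $|B(i,y)\cap W|\ge1$. *)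

theory Defs
  imports Main "HOL.Real"
begin

definition metric_on :: "'a set \<Rightarrow> ('a \<Rightarrow> 'a \<Rightarrow> real) \<Rightarrow> bool" where
  "metric_on X d \<longleftrightarrow>
     (\<forall>x\<in>X. \<forall>y\<in>X. d x y \<ge> 0) \<and>
     (\<forall>x\<in>X. \<forall>y\<in>X. d x y = 0 \<longleftrightarrow> x = y) \<and>
     (\<forall>x\<in>X. \<forall>y\<in>X. d x y = d y x) \<and>
     (\<forall>x\<in>X. \<forall>y\<in>X. \<forall>z\<in>X. d x z \<le> d x y + d y z)"

definition mball :: "'a set \<Rightarrow> ('a \<Rightarrow> 'a \<Rightarrow> real) \<Rightarrow> 'a \<Rightarrow> real \<Rightarrow> 'a set" where
  "mball X d x r = {z \<in> X. d x z \<le> r}"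

text \<open>Agents are indexed by {..<n} (i.e. [n]); agent i is located at p i.\<close>
definition UPRF :: "'a set \<Rightarrow> ('a \<Rightarrow> 'a \<Rightarrow> real) \<Rightarrow> nat \<Rightarrow> (nat \<Rightarrow> 'a) \<Rightarrow> nat \<Rightarrow> 'a set \<Rightarrow> bool" where
  "UPRF X d n p k W \<longleftrightarrow>
     \<not> (\<exists>l::nat. \<exists>N'. N' \<subseteq> {..<n} \<and> (\<exists>y::real.
          real (card N') \<ge> real l * real n / real k \<and>
          (\<forall>i\<in>N'. \<forall>i'\<in>N'. d (p i) (p i') \<le> y) \<and>
          card ((\<Union>i\<in>N'. mball X d (p i) y) \<inter> W) < l))"

definition rank_JR :: "'a set \<Rightarrow> ('a \<Rightarrow> 'a \<Rightarrow> real) \<Rightarrow> nat \<Rightarrow> (nat \<Rightarrow> 'a) \<Rightarrow> 'a set \<Rightarrow> nat \<Rightarrow> 'a set \<Rightarrow> bool" where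
  "rank_JR X d n p C k W \<longleftrightarrow>
     (\<forall>y::real. \<forall>N'. N' \<subseteq> {..<n} \<longrightarrow>
        real (card N') \<ge> real n / real k \<longrightarrow>
        card ((\<Inter>i\<in>N'. mball X d (p i) y) \<inter> C) \<ge> 1 \<longrightarrow>
        (\<exists>i\<in>N'. card (mball X d (p i) y \<inter> W) \<ge> 1))"

end

theory Submission
  imports Defs
begin

definition dd :: "nat \<Rightarrow> nat \<Rightarrow> real" where "dd x y = \<bar>real x - real y\<bar>"
definition pp :: "nat \<Rightarrow> nat" where "pp i = (if i = 0 then 0 else 4)"

lemma met: "metric_on UNIV dd"
  unfolding metric_on_def dd_def by auto

lemma card2: assumes "N' \<subseteq> {..<2::nat}" "card N' \<ge> 2" shows "N' = {0,1}"
proof -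
  have "{..<2::nat} = {0,1}" by auto
  hence f: "N' \<subseteq> {0,1}" using assms by auto
  have "card {0::nat,1} = 2" by simp
  thus ?thesis using f assms(2) card_seteq[of "{0::nat,1}" N'] by simp
qed

lemma uprf: "UPRF UNIV dd 2 pp 1 {7}"
  unfolding UPRF_def
proof (clarify)
  fix l N' y
  assume a: "N' \<subseteq> {..<2}" "real l * real 2 / real 1 \<le> real (card N')"
     "\<forall>i\<in>N'. \<forall>i'\<in>N'. dd (pp i) (pp i') \<le> y"
     "card ((\<Union>i\<in>N'. mball UNIV dd (pp i) y) \<inter> {7}) < l"
  have cN: "card N' \<le> 2" using a(1) card_mono[of "{..<2::nat}" N'] by simp
  have l1: "l = 1" using a(2,4) cN by (cases l) auto
  hence "N' = {0,1}" using a(2) card2[OF a(1)] by simp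
  hence "dd (pp 0) (pp 1) \<le> y" using a(3) by auto
  hence "7 \<in> mball UNIV dd (pp 1) y" unfolding mball_def dd_def pp_def by auto
  hence "(\<Union>i\<in>N'. mball UNIV dd (pp i) y) \<inter> {7} = {7}" using \<open>N' = {0,1}\<close> by auto
  thus False using a(4) l1 by simp
qed

lemma njr: "\<not> rank_JR UNIV dd 2 pp {0,2,4,7} 1 {7}"
  unfolding rank_JR_def
proof
  assume h: "\<forall>y. \<forall>N'. N' \<subseteq> {..<2} \<longrightarrow> real 2 / real 1 \<le> real (card N') \<longrightarrow>
        1 \<le> card ((\<Inter>i\<in>N'. mball UNIV dd (pp i) y) \<inter> {0, 2, 4, 7}) \<longrightarrow>
        (\<exists>i\<in>N'. 1 \<le> card (mball UNIV dd (pp i) y \<inter> {7}))"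
  have "2 \<in> (\<Inter>i\<in>{0,1}. mball UNIV dd (pp i) 2) \<inter> {0, 2, 4, 7::nat}"
    unfolding mball_def dd_def pp_def by auto
  hence "1 \<le> card ((\<Inter>i\<in>{0,1}. mball UNIV dd (pp i) 2) \<inter> {0, 2, 4, 7::nat})"
    by (metis One_nat_def Suc_leI card_gt_0_iff empty_iff finite.emptyI finite.insertI finite_Int)
  moreover have "{0,1} \<subseteq> {..<2::nat}" by auto
  ultimately obtain i where "i \<in> {0,1::nat}" "1 \<le> card (mball UNIV dd (pp i) 2 \<inter> {7})"
    using h[rule_format, of "{0,1}" 2] by auto
  moreover have "mball UNIV dd (pp i) 2 \<inter> {7} = {}" if "i \<in> {0,1::nat}" for i
    using that unfolding mball_def dd_def pp_def by auto
  ultimately show False by simp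
qed

theorem mainTheorem5:
  shows "\<exists>(X::nat set) d (n::nat) (p::nat \<Rightarrow> nat) (C::nat set) (k::nat) (W::nat set).
           metric_on X d \<and> C \<subseteq> X \<and> finite C \<and> n \<ge> 1 \<and> k \<ge> 1 \<and>
           p ` {..<n} \<subseteq> C \<and> k \<le> n \<and>
           W \<subseteq> C \<and> card W \<le> k \<and>
           UPRF X d n p k W \<and> \<not> rank_JR X d n p C k W"
proof -
  have "pp ` {..<2} \<subseteq> {0,2,4,7}" unfolding pp_def by auto
  thus ?thesis using met uprf njr
    by (intro exI[of _ UNIV] exI[of _ dd] exI[of _ 2] exI[of _ pp] exI[of _ "{0,2,4,7}"]
        exI[of _ 1] exI[of _ "{7}"]) auto
qed

end
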